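(* Let $i,h$ be receivers with $\psi_i>\psi_h\ge 1$ and $\varrho_i<\varrho_h$. Then $\mathbb E[\Delta_h]>\mathbb E[\Delta_i]$, where $\mathbb E[\Delta_r]$ denotes the expected primary degree of a vertex induced by receiver $r$.
   Context: A sender holds a frame $\mathcal N$ of $N\ge2$ packets and serves receivers $\mathcal M=\{1,\dots,M\}$. For each receiver $r$ there are sets $\mathcal H_r\subseteq\mathcal N$ (Has set), $\mathcal L_r=\mathcal N\setminus\mathcal H_r$ (Lacks set) and $\mathcal W_r\subseteq\mathcal L_r$ (Wants set), with cardinalities $\varrho_r=|\mathcal H_r|$, $\varphi_r=N-\varrho_r$, $\psi_r=|\mathcal W_r|$. The primary IDNC graph $\mathcal G_\rho$ has a vertex $v_{rj}$ for every receiver $r$ and every $j\in\mathcal W_r$; two distinct vertices $v_{rj},v_{kl}$ are adjacent iff (C1) $j=l$, or (C2) $j\in\mathcal H_k$ and $l\in\mathcal H_r$. The primary degree of a vertex is its degree in $\mathcal G_\rho$. Expectations are taken in the model that ignores set contents: given the cardinalities, the pairs $(\mathcal H_k,\mathcal W_k)$, $k\in\mathcal M$, are independent, $\mathcal H_k$ is a uniformly random $\varrho_k$-element subset of $\mathcal N$, and given $\mathcal H_k$, $\mathcal W_k$ is a uniformly random $\psi_k$-element subset of $\mathcal N\setminus\mathcal H_k$. For a receiver $r$ with $\psi_r\ge1$, $\mathbb E[\Delta_r]$ is the expected primary degree of $v_{rj}$ conditioned on $j\in\mathcal W_r$ (independent of the packet $j$). *)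

theory Defs
  imports "HOL-Probability.Probability"
begin

text \<open>Packets are 0..N-1, receivers are 1..M. A configuration assigns to each
receiver k a pair (Has set, Wants set). Cardinalities rho k and psi k are given.\<close>

definition packets :: "nat \<Rightarrow> nat set" where
  "packets N = {..<N}"

definition receivers :: "nat \<Rightarrow> nat set" where
  "receivers M = {1..M}"

definition rx_choices :: "nat \<Rightarrow> (nat \<Rightarrow> nat) \<Rightarrow> (nat \<Rightarrow> nat) \<Rightarrow> nat \<Rightarrow> (nat set \<times> nat set) set" where
  "rx_choices N rho psi k =
     {(H, W). H \<subseteq> packets N \<and> card H = rho k \<and> W \<subseteq> packets N - H \<and> card W = psi k}"

text \<open>All configurations; under the model (independent receivers, H uniform, W uniform
given H) the product distribution is uniform on this finite set.\<close>
definition configs :: "nat \<Rightarrow> nat \<Rightarrow> (nat \<Rightarrow> nat) \<Rightarrow> (nat \<Rightarrow> nat)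
    \<Rightarrow> (nat \<Rightarrow> nat set \<times> nat set) set" where
  "configs N M rho psi = PiE (receivers M) (rx_choices N rho psi)"

definition Has :: "(nat \<Rightarrow> nat set \<times> nat set) \<Rightarrow> nat \<Rightarrow> nat set" where
  "Has c k = fst (c k)"

definition Wants :: "(nat \<Rightarrow> nat set \<times> nat set) \<Rightarrow> nat \<Rightarrow> nat set" where
  "Wants c k = snd (c k)"

definition idnc_vertices :: "nat \<Rightarrow> (nat \<Rightarrow> nat set \<times> nat set) \<Rightarrow> (nat \<times> nat) set" where
  "idnc_vertices M c = {(k, l). k \<in> receivers M \<and> l \<in> Wants c k}"

text \<open>Adjacency: distinct vertices with (C1) same packet or (C2) j in H_k and l in H_r.\<close>
definition idnc_adj :: "(nat \<Rightarrow> nat set \<times> nat set) \<Rightarrow> nat \<times> nat \<Rightarrow> nat \<times> nat \<Rightarrow> bool" where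
  "idnc_adj c v u = (case v of (r, j) \<Rightarrow> case u of (k, l) \<Rightarrow>
      (r, j) \<noteq> (k, l) \<and> (j = l \<or> (j \<in> Has c k \<and> l \<in> Has c r)))"

definition primary_degree :: "nat \<Rightarrow> (nat \<Rightarrow> nat set \<times> nat set) \<Rightarrow> nat \<times> nat \<Rightarrow> nat" where
  "primary_degree M c v = card {u \<in> idnc_vertices M c. idnc_adj c v u}"

definition expected_degree :: "nat \<Rightarrow> nat \<Rightarrow> (nat \<Rightarrow> nat) \<Rightarrow> (nat \<Rightarrow> nat) \<Rightarrow> nat \<Rightarrow> nat \<Rightarrow> real" where
  "expected_degree N M rho psi r j =
     measure_pmf.expectation (pmf_of_set {c \<in> configs N M rho psi. j \<in> Wants c r})
       (\<lambda>c. real (primary_degree M c (r, j)))"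

end

theory Submission
  imports Defs
begin



definition RX :: "nat \<Rightarrow> nat \<Rightarrow> nat \<Rightarrow> (nat set \<times> nat set) set" where
  "RX N a b = {(H, W). H \<subseteq> {..<N} \<and> card H = a \<and> W \<subseteq> {..<N} - H \<and> card W = b}"

lemma rx_RX: "rx_choices N rho psi k = RX N (rho k) (psi k)"
  by (simp add: rx_choices_def RX_def packets_def)

lemma RX_finite: "finite (RX N a b)"
proof -
  have "RX N a b \<subseteq> Pow {..<N} \<times> Pow {..<N}" by (auto simp: RX_def)
  then show ?thesis by (rule finite_subset) auto
qed

lemma RX_ne: assumes "a + b \<le> N" shows "RX N a b \<noteq> {}"
proof -
  have "({..<a}, {a..<a+b}) \<in> RX N a b" using assms by (auto simp: RX_def)
  then show ?thesis by blast
qed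

definition sw :: "nat \<Rightarrow> nat \<Rightarrow> nat \<Rightarrow> nat" where
  "sw p q x = (if x = p then q else if x = q then p else x)"

lemma sw_sw[simp]: "sw p q (sw p q x) = x" by (simp add: sw_def)
lemma sw_inj: "inj (sw p q)" by (metis injI sw_sw)
lemma sw_p[simp]: "sw p q p = q" by (simp add: sw_def)
lemma sw_q[simp]: "sw p q q = p" by (simp add: sw_def)
lemma sw_other: "x \<noteq> p \<Longrightarrow> x \<noteq> q \<Longrightarrow> sw p q x = x" by (simp add: sw_def)
lemma sw_mem: "x \<in> sw p q ` W \<longleftrightarrow> sw p q x \<in> W"
  by (metis image_iff sw_sw)
lemma sw_img_img[simp]: "sw p q ` sw p q ` W = W"
  by (auto simp: sw_mem)

definition phi :: "nat \<Rightarrow> nat \<Rightarrow> nat set \<times> nat set \<Rightarrow> nat set \<times> nat set" where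
  "phi p q y = (sw p q ` fst y, sw p q ` snd y)"

lemma phi_phi[simp]: "phi p q (phi p q y) = y" by (simp add: phi_def)

lemma phi_RX: assumes "p < N" "q < N" "y \<in> RX N a b" shows "phi p q y \<in> RX N a b"
proof -
  obtain H W where y: "y = (H, W)" by force
  have sub: "sw p q ` X \<subseteq> {..<N}" if "X \<subseteq> {..<N}" for X
    using that assms(1,2) by (auto simp: sw_def)
  have c: "card (sw p q ` X) = card X" for X
    by (meson card_image inj_on_subset subset_UNIV sw_inj)
  from assms(3) y have "H \<subseteq> {..<N}" "card H = a" "W \<subseteq> {..<N} - H" "card W = b"
    by (auto simp: RX_def)
  moreover have "sw p q ` W \<inter> sw p q ` H = {}"
  proof -
    have "W \<inter> H = {}" using \<open>W \<subseteq> {..<N} - H\<close> by auto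
    then show ?thesis by (simp add: image_Int[OF sw_inj, symmetric])
  qed
  ultimately have "sw p q ` W \<subseteq> {..<N} - sw p q ` H" using sub[of W] by auto
  then show ?thesis using sub c \<open>H \<subseteq> {..<N}\<close> \<open>card H = a\<close> \<open>card W = b\<close>
    by (simp add: RX_def phi_def y)
qed

lemma RX_swap_card: assumes "p < N" "q < N"
  shows "card {y \<in> RX N a b. P y} = card {y \<in> RX N a b. P (phi p q y)}"
proof -
  have "{y \<in> RX N a b. P y} = phi p q ` {y \<in> RX N a b. P (phi p q y)}"
  proof (intro set_eqI iffI)
    fix y assume y: "y \<in> {y \<in> RX N a b. P y}"
    show "y \<in> phi p q ` {y \<in> RX N a b. P (phi p q y)}"
      by (rule image_eqI[where x="phi p q y"]) (use y phi_RX[OF assms] in auto)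
  next
    fix y assume "y \<in> phi p q ` {y \<in> RX N a b. P (phi p q y)}"
    then show "y \<in> {y \<in> RX N a b. P y}" using phi_RX[OF assms] by auto
  qed
  moreover have "inj (phi p q)" by (metis injI phi_phi)
  ultimately show ?thesis by (simp add: card_image inj_on_subset)
qed

lemma card_filter_sum: "finite S \<Longrightarrow> card {y\<in>S. P y} = (\<Sum>y\<in>S. if P y then 1 else (0::nat))"
  by (simp add: sum.If_cases Int_def conj_commute)

lemma cntW_eq: assumes "p < N" "q < N"
  shows "card {y \<in> RX N a b. p \<in> snd y} = card {y \<in> RX N a b. q \<in> snd y}"
  using RX_swap_card[OF assms, of a b "\<lambda>y. p \<in> snd y"]
  by (simp add: phi_def sw_mem)

lemma cntH_eq: assumes "p < N" "q < N"
  shows "card {y \<in> RX N a b. p \<in> fst y} = card {y \<in> RX N a b. q \<in> fst y}"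
  using RX_swap_card[OF assms, of a b "\<lambda>y. p \<in> fst y"]
  by (simp add: phi_def sw_mem)

lemma sumW: "(\<Sum>l<N. card {y \<in> RX N a b. l \<in> snd y}) = b * card (RX N a b)"
proof -
  have "(\<Sum>l<N. card {y \<in> RX N a b. l \<in> snd y})
      = (\<Sum>l<N. \<Sum>y\<in>RX N a b. if l \<in> snd y then 1 else 0)"
    by (simp add: card_filter_sum RX_finite)
  also have "\<dots> = (\<Sum>y\<in>RX N a b. \<Sum>l<N. if l \<in> snd y then 1 else 0)"
    by (rule sum.swap)
  also have "\<dots> = (\<Sum>y\<in>RX N a b. b)"
  proof (rule sum.cong[OF refl])
    fix y assume y: "y \<in> RX N a b"
    have "(\<Sum>l<N. if l \<in> snd y then 1 else (0::nat)) = card {l \<in> {..<N}. l \<in> snd y}"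
      by (rule card_filter_sum[symmetric]) simp
    also have "{l \<in> {..<N}. l \<in> snd y} = snd y" using y by (auto simp: RX_def)
    finally show "(\<Sum>l<N. if l \<in> snd y then 1 else (0::nat)) = b" using y by (auto simp: RX_def)
  qed
  finally show ?thesis by simp
qed

lemma sumH: "(\<Sum>l<N. card {y \<in> RX N a b. l \<in> fst y}) = a * card (RX N a b)"
proof -
  have "(\<Sum>l<N. card {y \<in> RX N a b. l \<in> fst y})
      = (\<Sum>l<N. \<Sum>y\<in>RX N a b. if l \<in> fst y then 1 else 0)"
    by (simp add: card_filter_sum RX_finite)
  also have "\<dots> = (\<Sum>y\<in>RX N a b. \<Sum>l<N. if l \<in> fst y then 1 else 0)"
    by (rule sum.swap)
  also have "\<dots> = (\<Sum>y\<in>RX N a b. a)"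
  proof (rule sum.cong[OF refl])
    fix y assume y: "y \<in> RX N a b"
    have "(\<Sum>l<N. if l \<in> fst y then 1 else (0::nat)) = card {l \<in> {..<N}. l \<in> fst y}"
      by (rule card_filter_sum[symmetric]) simp
    also have "{l \<in> {..<N}. l \<in> fst y} = fst y" using y by (auto simp: RX_def)
    finally show "(\<Sum>l<N. if l \<in> fst y then 1 else (0::nat)) = a" using y by (auto simp: RX_def)
  qed
  finally show ?thesis by simp
qed

lemma cntW_val: assumes "p < N"
  shows "N * card {y \<in> RX N a b. p \<in> snd y} = b * card (RX N a b)"
proof -
  have "(\<Sum>l<N. card {y \<in> RX N a b. l \<in> snd y}) = (\<Sum>l<N. card {y \<in> RX N a b. p \<in> snd y})"
    using cntW_eq[OF _ assms] by (intro sum.cong) auto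
  then show ?thesis using sumW[of N a b] by simp
qed

lemma cntH_val: assumes "p < N"
  shows "N * card {y \<in> RX N a b. p \<in> fst y} = a * card (RX N a b)"
proof -
  have "(\<Sum>l<N. card {y \<in> RX N a b. l \<in> fst y}) = (\<Sum>l<N. card {y \<in> RX N a b. p \<in> fst y})"
    using cntH_eq[OF _ assms] by (intro sum.cong) auto
  then show ?thesis using sumH[of N a b] by simp
qed



lemma n1_eq: assumes "l < N" "l' < N" "l \<noteq> j" "l' \<noteq> j"
  shows "card {y \<in> RX N a b. j \<in> snd y \<and> l \<in> fst y} = card {y \<in> RX N a b. j \<in> snd y \<and> l' \<in> fst y}"
proof -
  have sj: "sw l l' j = j" using assms(3,4) by (simp add: sw_other)
  show ?thesis
  using RX_swap_card[OF assms(1,2), of a b "\<lambda>y. j \<in> snd y \<and> l \<in> fst y"]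
  by (simp only: phi_def sw_mem sj sw_p fst_conv snd_conv)
qed
lemma n2_eq: assumes "l < N" "l' < N" "l \<noteq> j" "l' \<noteq> j"
  shows "card {y \<in> RX N a b. j \<in> fst y \<and> l \<in> snd y} = card {y \<in> RX N a b. j \<in> fst y \<and> l' \<in> snd y}"
proof -
  have sj: "sw l l' j = j" using assms(3,4) by (simp add: sw_other)
  show ?thesis
  using RX_swap_card[OF assms(1,2), of a b "\<lambda>y. j \<in> fst y \<and> l \<in> snd y"]
  by (simp only: phi_def sw_mem sj sw_p fst_conv snd_conv)
qed

lemma n1_sum: "(\<Sum>l\<in>{..<N}-{j}. card {y \<in> RX N a b. j \<in> snd y \<and> l \<in> fst y})
     = a * card {y \<in> RX N a b. j \<in> snd y}"
proof -
  let ?L = "{..<N}-{j}"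
  have "(\<Sum>l\<in>?L. card {y \<in> RX N a b. j \<in> snd y \<and> l \<in> fst y})
      = (\<Sum>l\<in>?L. \<Sum>y\<in>RX N a b. if j \<in> snd y \<and> l \<in> fst y then 1 else 0)"
    by (simp add: card_filter_sum RX_finite)
  also have "\<dots> = (\<Sum>y\<in>RX N a b. \<Sum>l\<in>?L. if j \<in> snd y \<and> l \<in> fst y then 1 else 0)"
    by (rule sum.swap)
  also have "\<dots> = (\<Sum>y\<in>RX N a b. if j \<in> snd y then a else 0)"
  proof (rule sum.cong[OF refl])
    fix y assume y: "y \<in> RX N a b"
    show "(\<Sum>l\<in>?L. if j \<in> snd y \<and> l \<in> fst y then 1 else (0::nat)) = (if j \<in> snd y then a else 0)"
    proof (cases "j \<in> snd y")
      case True
      have "(\<Sum>l\<in>?L. if j \<in> snd y \<and> l \<in> fst y then 1 else (0::nat)) = (\<Sum>l\<in>?L. if l \<in> fst y then 1 else (0::nat))"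
        using True by simp
      also have "\<dots> = card {l\<in>?L. l \<in> fst y}"
        by (rule card_filter_sum[symmetric]) simp
      also have "{l\<in>?L. l \<in> fst y} = fst y" using y True by (auto simp: RX_def)
      finally show ?thesis using y True by (auto simp: RX_def)
    qed simp
  qed
  also have "\<dots> = a * card {y \<in> RX N a b. j \<in> snd y}"
    by (simp add: sum.inter_filter[symmetric] RX_finite)
  finally show ?thesis .
qed

lemma n2_sum: "(\<Sum>l\<in>{..<N}-{j}. card {y \<in> RX N a b. j \<in> fst y \<and> l \<in> snd y})
     = b * card {y \<in> RX N a b. j \<in> fst y}"
proof -
  let ?L = "{..<N}-{j}"
  have "(\<Sum>l\<in>?L. card {y \<in> RX N a b. j \<in> fst y \<and> l \<in> snd y})
      = (\<Sum>l\<in>?L. \<Sum>y\<in>RX N a b. if j \<in> fst y \<and> l \<in> snd y then 1 else 0)"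
    by (simp add: card_filter_sum RX_finite)
  also have "\<dots> = (\<Sum>y\<in>RX N a b. \<Sum>l\<in>?L. if j \<in> fst y \<and> l \<in> snd y then 1 else 0)"
    by (rule sum.swap)
  also have "\<dots> = (\<Sum>y\<in>RX N a b. if j \<in> fst y then b else 0)"
  proof (rule sum.cong[OF refl])
    fix y assume y: "y \<in> RX N a b"
    show "(\<Sum>l\<in>?L. if j \<in> fst y \<and> l \<in> snd y then 1 else (0::nat)) = (if j \<in> fst y then b else 0)"
    proof (cases "j \<in> fst y")
      case True
      have "(\<Sum>l\<in>?L. if j \<in> fst y \<and> l \<in> snd y then 1 else (0::nat)) = (\<Sum>l\<in>?L. if l \<in> snd y then 1 else (0::nat))"
        using True by simp
      also have "\<dots> = card {l\<in>?L. l \<in> snd y}"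
        by (rule card_filter_sum[symmetric]) simp
      also have "{l\<in>?L. l \<in> snd y} = snd y" using y True by (auto simp: RX_def)
      finally show ?thesis using y True by (auto simp: RX_def)
    qed simp
  qed
  also have "\<dots> = b * card {y \<in> RX N a b. j \<in> fst y}"
    by (simp add: sum.inter_filter[symmetric] RX_finite)
  finally show ?thesis .
qed

lemma n1_val: assumes "l < N" "l \<noteq> j" "j < N"
  shows "(N - 1) * card {y \<in> RX N a b. j \<in> snd y \<and> l \<in> fst y} = a * card {y \<in> RX N a b. j \<in> snd y}"
proof -
  have "(\<Sum>l'\<in>{..<N}-{j}. card {y \<in> RX N a b. j \<in> snd y \<and> l' \<in> fst y})
      = (\<Sum>l'\<in>{..<N}-{j}. card {y \<in> RX N a b. j \<in> snd y \<and> l \<in> fst y})"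
    using n1_eq[OF _ assms(1) _ assms(2)] by (intro sum.cong) auto
  moreover have "card ({..<N}-{j}) = N - 1" using assms by (simp add: card_Diff_singleton)
  ultimately show ?thesis using n1_sum[of N a b j] by simp
qed

lemma n2_val: assumes "l < N" "l \<noteq> j" "j < N"
  shows "(N - 1) * card {y \<in> RX N a b. j \<in> fst y \<and> l \<in> snd y} = b * card {y \<in> RX N a b. j \<in> fst y}"
proof -
  have "(\<Sum>l'\<in>{..<N}-{j}. card {y \<in> RX N a b. j \<in> fst y \<and> l' \<in> snd y})
      = (\<Sum>l'\<in>{..<N}-{j}. card {y \<in> RX N a b. j \<in> fst y \<and> l \<in> snd y})"
    using n2_eq[OF _ assms(1) _ assms(2)] by (intro sum.cong) auto
  moreover have "card ({..<N}-{j}) = N - 1" using assms by (simp add: card_Diff_singleton)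
  ultimately show ?thesis using n2_sum[of N a b j] by simp
qed




definition gg :: "nat \<Rightarrow> nat set \<times> nat set \<Rightarrow> nat set \<times> nat set \<Rightarrow> nat" where
  "gg j x y = card {l \<in> snd y. l = j \<or> (j \<in> fst y \<and> l \<in> fst x)}"

lemma rcard: "finite S \<Longrightarrow> real (card {y\<in>S. P y}) = (\<Sum>y\<in>S. if P y then 1 else (0::real))"
  by (simp add: card_filter_sum of_nat_sum if_distrib cong: if_cong)

lemma gg_split:
  assumes x: "x \<in> RX N a' b'" "j \<in> snd x" and y: "y \<in> RX N a b"
  shows "real (gg j x y) = (if j \<in> snd y then 1 else 0)
     + (\<Sum>l\<in>{..<N}-{j}. (if l \<in> fst x then 1 else 0) * (if j \<in> fst y \<and> l \<in> snd y then 1 else (0::real)))"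
proof (cases "j \<in> fst y")
  case True
  have nj: "j \<notin> snd y" using y True by (auto simp: RX_def)
  have "{l \<in> snd y. l = j \<or> (j \<in> fst y \<and> l \<in> fst x)} = {l\<in>{..<N}-{j}. l \<in> fst x \<and> l \<in> snd y}"
    using nj True y by (auto simp: RX_def)
  then have "real (gg j x y) = real (card {l\<in>{..<N}-{j}. l \<in> fst x \<and> l \<in> snd y})"
    by (simp only: gg_def)
  also have "\<dots> = (\<Sum>l\<in>{..<N}-{j}. if l \<in> fst x \<and> l \<in> snd y then 1 else (0::real))"
    by (rule rcard) simp
  also have "\<dots> = (\<Sum>l\<in>{..<N}-{j}. (if l \<in> fst x then 1 else 0) * (if j \<in> fst y \<and> l \<in> snd y then 1 else (0::real)))"
    using True by (intro sum.cong) auto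
  finally show ?thesis using nj by simp
next
  case False
  have "{l \<in> snd y. l = j \<or> (j \<in> fst y \<and> l \<in> fst x)} = (if j \<in> snd y then {j} else {})"
    using False by auto
  then show ?thesis using False by (simp add: gg_def)
qed

lemma sum_swap3:
  fixes f :: "'a \<Rightarrow> 'c \<Rightarrow> real" and h :: "'b \<Rightarrow> 'c \<Rightarrow> real"
  shows "(\<Sum>x\<in>X. \<Sum>y\<in>Y. \<Sum>l\<in>L. f x l * h y l) = (\<Sum>l\<in>L. (\<Sum>x\<in>X. f x l) * (\<Sum>y\<in>Y. h y l))"
proof -
  have "(\<Sum>x\<in>X. \<Sum>y\<in>Y. \<Sum>l\<in>L. f x l * h y l) = (\<Sum>x\<in>X. \<Sum>l\<in>L. \<Sum>y\<in>Y. f x l * h y l)"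
    by (intro sum.cong refl sum.swap)
  also have "\<dots> = (\<Sum>l\<in>L. \<Sum>x\<in>X. \<Sum>y\<in>Y. f x l * h y l)"
    by (rule sum.swap)
  also have "\<dots> = (\<Sum>l\<in>L. (\<Sum>x\<in>X. f x l) * (\<Sum>y\<in>Y. h y l))"
    by (simp add: sum_product)
  finally show ?thesis .
qed

lemma alg: fixes n p q a a' b :: real
  assumes "n - 1 > 0" "p > 0" "q > 0"
  shows "(p * (b * q / n) + (n - 1) * ((a' * p / (n - 1)) * (b * (a * q / n) / (n - 1)))) / (p * q)
       = b / n + a' * a * b / (n * (n - 1))"
proof -
  have n: "n \<noteq> 0" "n - 1 \<noteq> 0" using assms by auto
  have "(n - 1) * ((a' * p / (n - 1)) * (b * (a * q / n) / (n - 1))) = ((n - 1) * (a' * p / (n - 1))) * (b * (a * q / n) / (n - 1))"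
    by (simp only: mult.assoc)
  also have "(n - 1) * (a' * p / (n - 1)) = a' * p" using n by simp
  also have "a' * p * (b * (a * q / n) / (n - 1)) = (p * q) * (a' * a * b / (n * (n - 1)))"
    using n by (simp add: field_simps)
  finally have 1: "(n - 1) * ((a' * p / (n - 1)) * (b * (a * q / n) / (n - 1))) = (p * q) * (a' * a * b / (n * (n - 1)))" .
  have 2: "p * (b * q / n) = (p * q) * (b / n)" by simp
  have 3: "p * q \<noteq> 0" using assms by simp
  show ?thesis unfolding 1 2 distrib_left[symmetric] using nonzero_mult_div_cancel_left[OF 3] by blast
qed

lemma T_formula:
  assumes N: "N \<ge> 2" and j: "j < N"
    and ne1: "card {x \<in> RX N a' b'. j \<in> snd x} > 0" and ne2: "card (RX N a b) > 0"
  shows "(\<Sum>x\<in>{x \<in> RX N a' b'. j \<in> snd x}. \<Sum>y\<in>RX N a b. real (gg j x y))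
        / (real (card {x \<in> RX N a' b'. j \<in> snd x}) * real (card (RX N a b)))
       = real b / real N + real a' * real a * real b / (real N * (real N - 1))"
proof -
  let ?A' = "{x \<in> RX N a' b'. j \<in> snd x}" and ?A = "RX N a b" and ?L = "{..<N}-{j}"
  let ?cA' = "real (card ?A')" and ?cA = "real (card ?A)"
  let ?cW = "real (card {y \<in> ?A. j \<in> snd y})" and ?cH = "real (card {y \<in> ?A. j \<in> fst y})"
  have fA': "finite ?A'" and fA: "finite ?A" using RX_finite by auto
  have "(\<Sum>x\<in>?A'. \<Sum>y\<in>?A. real (gg j x y)) =
     (\<Sum>x\<in>?A'. \<Sum>y\<in>?A. (if j \<in> snd y then 1 else 0)
     + (\<Sum>l\<in>?L. (if l \<in> fst x then 1 else 0) * (if j \<in> fst y \<and> l \<in> snd y then 1 else (0::real))))"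
    using gg_split by (intro sum.cong refl) auto
  also have "\<dots> = (\<Sum>x\<in>?A'. \<Sum>y\<in>?A. (if j \<in> snd y then 1 else 0))
     + (\<Sum>x\<in>?A'. \<Sum>y\<in>?A. \<Sum>l\<in>?L. (if l \<in> fst x then 1 else 0) * (if j \<in> fst y \<and> l \<in> snd y then 1 else (0::real)))"
    by (simp add: sum.distrib)
  also have "(\<Sum>x\<in>?A'. \<Sum>y\<in>?A. (if j \<in> snd y then 1 else (0::real))) = ?cA' * ?cW"
    using rcard[OF fA, of "\<lambda>y. j \<in> snd y"] by simp
  also have "(\<Sum>x\<in>?A'. \<Sum>y\<in>?A. \<Sum>l\<in>?L. (if l \<in> fst x then 1 else 0) * (if j \<in> fst y \<and> l \<in> snd y then 1 else (0::real)))
      = (\<Sum>l\<in>?L. (\<Sum>x\<in>?A'. if l \<in> fst x then 1 else 0) * (\<Sum>y\<in>?A. if j \<in> fst y \<and> l \<in> snd y then 1 else (0::real)))"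
    by (rule sum_swap3)
  also have "\<dots> = (\<Sum>l\<in>?L. (real a' * ?cA' / (real N - 1)) * (real b * ?cH / (real N - 1)))"
  proof (intro sum.cong refl)
    fix l assume l: "l \<in> ?L"
    have e1: "(\<Sum>x\<in>?A'. if l \<in> fst x then 1 else (0::real)) = real (card {x \<in> RX N a' b'. j \<in> snd x \<and> l \<in> fst x})"
    proof -
      have "{x \<in> RX N a' b'. j \<in> snd x \<and> l \<in> fst x} = {x \<in> ?A'. l \<in> fst x}" by auto
      then show ?thesis using rcard[OF fA', of "\<lambda>x. l \<in> fst x"] by simp
    qed
    have e2: "(\<Sum>y\<in>?A. if j \<in> fst y \<and> l \<in> snd y then 1 else (0::real)) = real (card {y \<in> ?A. j \<in> fst y \<and> l \<in> snd y})"
      using rcard[OF fA] by simp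
    have v1: "(real N - 1) * real (card {x \<in> RX N a' b'. j \<in> snd x \<and> l \<in> fst x}) = real a' * ?cA'"
    proof -
      have "real ((N - 1) * card {x \<in> RX N a' b'. j \<in> snd x \<and> l \<in> fst x}) = real (a' * card {x \<in> RX N a' b'. j \<in> snd x})"
        using n1_val[of l N j a' b'] l j by (intro arg_cong[where f=real]) auto
      moreover have "1 \<le> N" using N by simp
      ultimately show ?thesis by (simp add: of_nat_diff)
    qed
    have v2: "(real N - 1) * real (card {y \<in> ?A. j \<in> fst y \<and> l \<in> snd y}) = real b * ?cH"
    proof -
      have "real ((N - 1) * card {y \<in> ?A. j \<in> fst y \<and> l \<in> snd y}) = real (b * card {y \<in> ?A. j \<in> fst y})"
        using n2_val[of l N j a b] l j by (intro arg_cong[where f=real]) auto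
      moreover have "1 \<le> N" using N by simp
      ultimately show ?thesis by (simp add: of_nat_diff)
    qed
    have "real N - 1 > 0" using N by simp
    then show "(\<Sum>x\<in>?A'. if l \<in> fst x then 1 else (0::real)) * (\<Sum>y\<in>?A. if j \<in> fst y \<and> l \<in> snd y then 1 else (0::real))
       = (real a' * ?cA' / (real N - 1)) * (real b * ?cH / (real N - 1))"
    proof -
      have q1: "real (card {x \<in> RX N a' b'. j \<in> snd x \<and> l \<in> fst x}) = real a' * ?cA' / (real N - 1)"
        using v1 \<open>real N - 1 > 0\<close> by (simp add: eq_divide_eq mult.commute)
      have q2: "real (card {y \<in> ?A. j \<in> fst y \<and> l \<in> snd y}) = real b * ?cH / (real N - 1)"
        using v2 \<open>real N - 1 > 0\<close> by (simp add: eq_divide_eq mult.commute)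
      show ?thesis unfolding e1 e2 q1 q2 ..
    qed
  qed
  also have "\<dots> = (real N - 1) * ((real a' * ?cA' / (real N - 1)) * (real b * ?cH / (real N - 1)))"
    using j N by (simp add: card_Diff_singleton of_nat_diff)
  finally have S: "(\<Sum>x\<in>?A'. \<Sum>y\<in>?A. real (gg j x y)) = ?cA' * ?cW + (real N - 1) * ((real a' * ?cA' / (real N - 1)) * (real b * ?cH / (real N - 1)))" .
  have W: "real N * ?cW = real b * ?cA" using cntW_val[OF j, of a b] by (simp flip: of_nat_mult)
  have H: "real N * ?cH = real a * ?cA" using cntH_val[OF j, of a b] by (simp flip: of_nat_mult)
  have p1: "?cA' > 0" "?cA > 0" using ne1 ne2 by auto
  have p2: "real N - 1 > 0" "real N > 0" using N by auto
  have cW: "?cW = real b * ?cA / real N" using W p2 by (simp add: field_simps)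
  have cH: "?cH = real a * ?cA / real N" using H p2 by (simp add: field_simps)
  show ?thesis unfolding S cW cH by (rule alg[OF p2(1) p1])
qed




lemma prod_upd2:
  assumes "finite I" "r \<in> I" "k \<in> I" "r \<noteq> k"
  shows "(\<Prod>m\<in>I. h m) = h r * h k * (\<Prod>m\<in>I-{r,k}. h m)"
proof -
  have "(\<Prod>m\<in>I. h m) = h r * (\<Prod>m\<in>I-{r}. h m)" using assms by (simp add: prod.remove)
  also have "(\<Prod>m\<in>I-{r}. h m) = h k * (\<Prod>m\<in>I-{r}-{k}. h m)" using assms by (simp add: prod.remove)
  also have "I-{r}-{k} = I-{r,k}" by auto
  finally show ?thesis by (simp add: mult.assoc)
qed

lemma sum_PiE_two:
  fixes f :: "'b \<Rightarrow> 'b \<Rightarrow> real"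
  assumes I: "finite I" "r \<in> I" "k \<in> I" "r \<noteq> k" and fin: "\<forall>m\<in>I. finite (B m)"
  shows "(\<Sum>c\<in>PiE I B. f (c r) (c k)) = real (\<Prod>m\<in>I-{r,k}. card (B m)) * (\<Sum>x\<in>B r. \<Sum>y\<in>B k. f x y)"
proof -
  let ?S = "PiE I B" and ?C = "\<Prod>m\<in>I-{r,k}. card (B m)"
  have fS: "finite ?S" using I fin by (simp add: finite_PiE)
  have fT: "finite (B r \<times> B k)" using I fin by auto
  have sub: "(\<lambda>c. (c r, c k)) ` ?S \<subseteq> B r \<times> B k" using I by (auto simp: PiE_iff)
  have "(\<Sum>c\<in>?S. f (c r) (c k)) = (\<Sum>z\<in>B r \<times> B k. \<Sum>c\<in>{c. c \<in> ?S \<and> (c r, c k) = z}. f (c r) (c k))"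
    by (rule sum.group[OF fS fT sub, symmetric])
  also have "\<dots> = (\<Sum>z\<in>B r \<times> B k. real ?C * f (fst z) (snd z))"
  proof (intro sum.cong refl)
    fix z assume z: "z \<in> B r \<times> B k"
    obtain x y where xy: "z = (x, y)" by force
    have eq: "{c. c \<in> ?S \<and> (c r, c k) = z} = PiE I ((B(r := {x}))(k := {y}))"
      using z xy I by (auto simp: PiE_iff extensional_def fun_upd_apply split: if_splits)
    have "card (PiE I ((B(r := {x}))(k := {y}))) = (\<Prod>m\<in>I. card (((B(r := {x}))(k := {y})) m))"
      using I by (simp add: card_PiE)
    also have "\<dots> = ?C" using I
      by (subst prod_upd2[OF I]) (auto intro!: prod.cong)
    finally have cc: "card {c. c \<in> ?S \<and> (c r, c k) = z} = ?C" using eq by simp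
    have "(\<Sum>c\<in>{c. c \<in> ?S \<and> (c r, c k) = z}. f (c r) (c k)) = (\<Sum>c\<in>{c. c \<in> ?S \<and> (c r, c k) = z}. f x y)"
      using xy by (intro sum.cong) auto
    also have "\<dots> = real ?C * f x y" using cc by simp
    finally show "(\<Sum>c\<in>{c. c \<in> ?S \<and> (c r, c k) = z}. f (c r) (c k)) = real ?C * f (fst z) (snd z)"
      using xy by simp
  qed
  also have "\<dots> = real ?C * (\<Sum>z\<in>B r \<times> B k. f (fst z) (snd z))" by (simp add: sum_distrib_left)
  also have "(\<Sum>z\<in>B r \<times> B k. f (fst z) (snd z)) = (\<Sum>x\<in>B r. \<Sum>y\<in>B k. f x y)"
    by (simp add: sum.cartesian_product case_prod_beta)
  finally show ?thesis .
qed

lemma card_PiE_two: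
  assumes I: "finite I" "r \<in> I" "k \<in> I" "r \<noteq> k"
  shows "card (PiE I B) = card (B r) * card (B k) * (\<Prod>m\<in>I-{r,k}. card (B m))"
  using I by (simp add: card_PiE prod_upd2[OF I])

lemma configs_RX: "c \<in> configs N M rho psi \<Longrightarrow> k \<in> receivers M \<Longrightarrow> c k \<in> RX N (rho k) (psi k)"
  by (auto simp: configs_def rx_RX PiE_iff)

lemma deg_formula:
  assumes c: "c \<in> configs N M rho psi" and r: "r \<in> receivers M" and j: "j \<in> Wants c r"
  shows "primary_degree M c (r, j) = (\<Sum>k\<in>receivers M - {r}. gg j (c r) (c k))"
proof -
  have cr: "c r \<in> RX N (rho r) (psi r)" using configs_RX[OF c r] .
  have jH: "j \<notin> Has c r" using cr j by (auto simp: RX_def Has_def Wants_def)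
  have eq: "{u \<in> idnc_vertices M c. idnc_adj c (r, j) u}
     = Sigma (receivers M - {r}) (\<lambda>k. {l \<in> snd (c k). l = j \<or> (j \<in> fst (c k) \<and> l \<in> fst (c r))})"
    using jH by (auto simp: idnc_vertices_def idnc_adj_def Has_def Wants_def)
  have fin: "\<forall>k\<in>receivers M - {r}. finite {l \<in> snd (c k). l = j \<or> (j \<in> fst (c k) \<and> l \<in> fst (c r))}"
  proof
    fix k assume k: "k \<in> receivers M - {r}"
    have ck: "c k \<in> RX N (rho k) (psi k)" using configs_RX[OF c] k by auto
    have "snd (c k) \<subseteq> {..<N}" using ck by (cases "c k") (auto simp: RX_def)
    then have "finite (snd (c k))" by (rule finite_subset) simp
    then show "finite {l \<in> snd (c k). l = j \<or> (j \<in> fst (c k) \<and> l \<in> fst (c r))}"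
      by simp
  qed
  show ?thesis unfolding primary_degree_def eq using fin
    by (simp add: gg_def receivers_def)
qed




definition tt :: "nat \<Rightarrow> (nat \<Rightarrow> nat) \<Rightarrow> (nat \<Rightarrow> nat) \<Rightarrow> nat \<Rightarrow> nat \<Rightarrow> real" where
  "tt N rho psi a k = real (psi k) / real N + real a * real (rho k) * real (psi k) / (real N * (real N - 1))"

lemma E_formula:
  assumes N: "N \<ge> 2" and adm: "\<forall>k \<in> receivers M. rho k + psi k \<le> N"
    and r: "r \<in> receivers M" and pr: "psi r \<ge> 1" and j: "j < N"
  shows "expected_degree N M rho psi r j = (\<Sum>k\<in>receivers M - {r}. tt N rho psi (rho r) k)"
proof -
  let ?R = "receivers M"
  define B where "B = (\<lambda>k. RX N (rho k) (psi k))"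
  define B' where "B' = B(r := {x \<in> B r. j \<in> snd x})"
  let ?S = "{c \<in> configs N M rho psi. j \<in> Wants c r}"
  have fR: "finite ?R" by (simp add: receivers_def)
  have cfg: "configs N M rho psi = PiE ?R B"
    by (simp add: configs_def B_def rx_RX[abs_def])
  have Seq: "?S = PiE ?R B'"
    using r by (auto simp: cfg B'_def PiE_iff Wants_def extensional_def split: if_splits)
  have finB': "\<forall>m\<in>?R. finite (B' m)" by (simp add: B'_def B_def RX_finite)
  have posB: "card (B m) > 0" if "m \<in> ?R" for m
    using RX_ne[of "rho m" "psi m" N] adm that RX_finite by (auto simp: B_def card_gt_0_iff)
  have posBr: "card (B' r) > 0"
  proof -
    have "N * card {y \<in> B r. j \<in> snd y} = psi r * card (B r)"
      using cntW_val[OF j, of "rho r" "psi r"] by (simp add: B_def)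
    moreover have "psi r * card (B r) > 0" using pr posB[OF r] by simp
    ultimately show ?thesis by (simp add: B'_def) (metis mult_is_0 neq0_conv)
  qed
  have posB': "card (B' m) > 0" if "m \<in> ?R" for m
    using posB[OF that] posBr by (cases "m = r") (auto simp: B'_def)
  have cS: "card ?S > 0" unfolding Seq using fR posB' by (simp add: card_PiE prod_pos)
  then have Sne: "?S \<noteq> {}" and Sfin: "finite ?S" using card_gt_0_iff by blast+
  have "expected_degree N M rho psi r j = (\<Sum>c\<in>?S. real (primary_degree M c (r, j))) / real (card ?S)"
    unfolding expected_degree_def using integral_pmf_of_set[OF Sne Sfin] by simp
  also have "(\<Sum>c\<in>?S. real (primary_degree M c (r, j))) = (\<Sum>c\<in>?S. \<Sum>k\<in>?R - {r}. real (gg j (c r) (c k)))"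
    using deg_formula r by (intro sum.cong refl) auto
  also have "\<dots> = (\<Sum>k\<in>?R - {r}. \<Sum>c\<in>?S. real (gg j (c r) (c k)))" by (rule sum.swap)
  also have "\<dots> / real (card ?S) = (\<Sum>k\<in>?R - {r}. (\<Sum>c\<in>?S. real (gg j (c r) (c k))) / real (card ?S))"
    by (simp add: sum_divide_distrib)
  also have "\<dots> = (\<Sum>k\<in>?R - {r}. tt N rho psi (rho r) k)"
  proof (intro sum.cong refl)
    fix k assume k: "k \<in> ?R - {r}"
    have I: "finite ?R" "r \<in> ?R" "k \<in> ?R" "r \<noteq> k" using fR r k by auto
    let ?C = "\<Prod>m\<in>?R-{r,k}. card (B' m)"
    have s: "(\<Sum>c\<in>?S. real (gg j (c r) (c k))) = real ?C * (\<Sum>x\<in>B' r. \<Sum>y\<in>B' k. real (gg j x y))"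
      unfolding Seq by (rule sum_PiE_two[OF I finB'])
    have c: "card ?S = card (B' r) * card (B' k) * ?C" unfolding Seq by (rule card_PiE_two[OF I])
    have "?C > 0" by (rule prod_pos) (use posB' in auto)
    then have Cpos: "real ?C > 0" by (simp only: of_nat_0_less_iff)
    have "(\<Sum>c\<in>?S. real (gg j (c r) (c k))) / real (card ?S)
        = (\<Sum>x\<in>B' r. \<Sum>y\<in>B' k. real (gg j x y)) / (real (card (B' r)) * real (card (B' k)))"
      unfolding s c using Cpos by simp
    also have "\<dots> = tt N rho psi (rho r) k"
    proof -
      have Br: "B' r = {x \<in> RX N (rho r) (psi r). j \<in> snd x}" by (simp add: B'_def B_def)
      have Bk: "B' k = RX N (rho k) (psi k)" using I by (simp add: B'_def B_def)
      have p1: "card {x \<in> RX N (rho r) (psi r). j \<in> snd x} > 0" using posBr unfolding Br .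
      have p2: "card (RX N (rho k) (psi k)) > 0" using posB'[OF I(3)] unfolding Bk .
      show ?thesis unfolding Br Bk tt_def by (rule T_formula[OF N j p1 p2])
    qed
    finally show "(\<Sum>c\<in>?S. real (gg j (c r) (c k))) / real (card ?S) = tt N rho psi (rho r) k" .
  qed
  finally show ?thesis .
qed

theorem theorem2:
  fixes N M :: nat and rho psi :: "nat \<Rightarrow> nat" and i h j j' :: nat
  assumes "N \<ge> 2"
    and "\<forall>k \<in> receivers M. rho k + psi k \<le> N"
    and "i \<in> receivers M" and "h \<in> receivers M"
    and "psi i > psi h" and "psi h \<ge> 1"
    and "rho i < rho h"
    and "j \<in> packets N" and "j' \<in> packets N"
  shows "expected_degree N M rho psi h j > expected_degree N M rho psi i j'"
proof -
  let ?R = "receivers M"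
  have fR: "finite ?R" by (simp add: receivers_def)
  have hi: "h \<noteq> i" using assms(5) by auto
  have Eh: "expected_degree N M rho psi h j = (\<Sum>k\<in>?R - {h}. tt N rho psi (rho h) k)"
    using E_formula[OF assms(1,2,4,6)] assms(8) by (simp add: packets_def)
  have Ei: "expected_degree N M rho psi i j' = (\<Sum>k\<in>?R - {i}. tt N rho psi (rho i) k)"
    using E_formula[OF assms(1,2,3)] assms(5,6,9) by (simp add: packets_def)
  have D: "real N * (real N - 1) > 0" using assms(1) by simp
  have s1: "(\<Sum>k\<in>?R - {h}. tt N rho psi (rho h) k) = tt N rho psi (rho h) i + (\<Sum>k\<in>?R - {h, i}. tt N rho psi (rho h) k)"
  proof -
    have eq: "?R - {h} = insert i (?R - {h, i})" using assms(3) hi by auto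
    show ?thesis unfolding eq by (rule sum.insert) (use fR in auto)
  qed
  have s2: "(\<Sum>k\<in>?R - {i}. tt N rho psi (rho i) k) = tt N rho psi (rho i) h + (\<Sum>k\<in>?R - {h, i}. tt N rho psi (rho i) k)"
  proof -
    have eq: "?R - {i} = insert h (?R - {h, i})" using assms(4) hi by auto
    show ?thesis unfolding eq by (rule sum.insert) (use fR in auto)
  qed
  have mono: "tt N rho psi (rho i) k \<le> tt N rho psi (rho h) k" for k
  proof -
    have "real (rho i) * real (rho k) * real (psi k) \<le> real (rho h) * real (rho k) * real (psi k)"
      using assms(7) by (intro mult_right_mono) auto
    then show ?thesis unfolding tt_def using D by (simp add: divide_right_mono)
  qed
  have strict: "tt N rho psi (rho i) h < tt N rho psi (rho h) i"
  proof -
    have a: "real (psi h) / real N < real (psi i) / real N" using assms(1,5) by (simp add: divide_strict_right_mono)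
    have "real (rho i) * real (rho h) * real (psi h) \<le> real (rho i) * real (rho h) * real (psi i)"
      using assms(5) by (intro mult_left_mono) auto
    then have "real (rho i) * real (rho h) * real (psi h) \<le> real (rho h) * real (rho i) * real (psi i)"
      by (simp only: mult.commute[of "real (rho i)" "real (rho h)"])
    then have b: "real (rho i) * real (rho h) * real (psi h) / (real N * (real N - 1)) \<le> real (rho h) * real (rho i) * real (psi i) / (real N * (real N - 1))"
      using D by (simp add: divide_right_mono)
    show ?thesis unfolding tt_def using a b by linarith
  qed
  have "(\<Sum>k\<in>?R - {h, i}. tt N rho psi (rho i) k) \<le> (\<Sum>k\<in>?R - {h, i}. tt N rho psi (rho h) k)"
    by (rule sum_mono) (rule mono)
  then show ?thesis unfolding Eh Ei s1 s2 using strict by linarith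
qed


end
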